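(* Let $G$ be a Lie group with Lie algebra $\mathfrak{g}$ and left-invariant metric given by an inner product $\langle\cdot,\cdot\rangle$ on $\mathfrak{g}$. Let $\mathfrak{n}$ be the nilradical of $\mathfrak{g}$ and $\mathfrak{r}$ its orthogonal complement, and assume $[\mathfrak{r},\mathfrak{r}]\subset\mathfrak{r}$. Let $\{r_i\}$ be an orthonormal basis of $\mathfrak{r}$. Then for all $A,B\in\mathfrak{r}$ and $Z,W\in\mathfrak{n}$: $$\langle \mathrm{M}Z,W\rangle=\langle\mathrm{M}_\mathfrak{n}Z,W\rangle+\tfrac12\sum_i\langle[\operatorname{ad}_{r_i}|_\mathfrak{n},\operatorname{ad}_{r_i}^t|_\mathfrak{n}]Z,W\rangle,$$ $$\langle\mathrm{M}A,B\rangle=\langle\mathrm{M}_\mathfrak{r}A,B\rangle-\tfrac12\operatorname{tr}(\operatorname{ad}_A|_\mathfrak{n}\operatorname{ad}_B^t|_\mathfrak{n}),$$ $$\langle\mathrm{M}A,W\rangle=-\tfrac12\operatorname{tr}(\operatorname{ad}_A|_\mathfrak{n}\operatorname{ad}_W^t|_\mathfrak{n}).$$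
   Context: For a Lie algebra $(\mathfrak{g},\mu)$ with inner product $\langle\cdot,\cdot\rangle$ and orthonormal basis $\{X_k\}$, the symmetric tensor $\mathrm{M}$ is $\mathrm{M}(X,Y)=-\tfrac12\sum_k\langle\mu(X,X_k),\mu(Y,X_k)\rangle+\tfrac14\sum_{k,j}\langle\mu(X_k,X_j),X\rangle\langle\mu(X_k,X_j),Y\rangle$, identified with the endomorphism $\mathrm{M}$ via $\langle\mathrm{M}X,Y\rangle=\mathrm{M}(X,Y)$. $\mathrm{M}_\mathfrak{n}$ (resp. $\mathrm{M}_\mathfrak{r}$) is the analogous endomorphism of $\mathfrak{n}$ (resp. $\mathfrak{r}$) with the restricted bracket and inner product. Transposes $^t$ are with respect to $\langle\cdot,\cdot\rangle$. *)

theory Defs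
  imports "HOL-Analysis.Analysis"
begin

text \<open>A real Lie algebra structure on a finite-dimensional inner product space 'a
  (the inner product of 'a plays the role of the left-invariant metric).\<close>
definition lie_algebra :: "('a::euclidean_space \<Rightarrow> 'a \<Rightarrow> 'a) \<Rightarrow> bool" where
  "lie_algebra \<mu> \<longleftrightarrow> bilinear \<mu> \<and> (\<forall>x. \<mu> x x = 0) \<and>
     (\<forall>x y z. \<mu> x (\<mu> y z) + \<mu> y (\<mu> z x) + \<mu> z (\<mu> x y) = 0)"

definition lie_ideal :: "('a::euclidean_space \<Rightarrow> 'a \<Rightarrow> 'a) \<Rightarrow> 'a set \<Rightarrow> bool" where
  "lie_ideal \<mu> I \<longleftrightarrow> subspace I \<and> (\<forall>x y. y \<in> I \<longrightarrow> \<mu> x y \<in> I)"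

fun lower_central :: "('a::euclidean_space \<Rightarrow> 'a \<Rightarrow> 'a) \<Rightarrow> 'a set \<Rightarrow> nat \<Rightarrow> 'a set" where
  "lower_central \<mu> I 0 = I"
| "lower_central \<mu> I (Suc k) = span {\<mu> x y | x y. x \<in> I \<and> y \<in> lower_central \<mu> I k}"

definition nilpotent_sub :: "('a::euclidean_space \<Rightarrow> 'a \<Rightarrow> 'a) \<Rightarrow> 'a set \<Rightarrow> bool" where
  "nilpotent_sub \<mu> I \<longleftrightarrow> (\<exists>k. lower_central \<mu> I k = {0})"

definition is_nilradical :: "('a::euclidean_space \<Rightarrow> 'a \<Rightarrow> 'a) \<Rightarrow> 'a set \<Rightarrow> bool" where
  "is_nilradical \<mu> N \<longleftrightarrow> lie_ideal \<mu> N \<and> nilpotent_sub \<mu> N \<and>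
     (\<forall>I. lie_ideal \<mu> I \<and> nilpotent_sub \<mu> I \<longrightarrow> I \<subseteq> N)"

definition onb :: "'a::euclidean_space set \<Rightarrow> 'a set \<Rightarrow> bool" where
  "onb V B \<longleftrightarrow> finite B \<and> B \<subseteq> V \<and> span B = V \<and> (\<forall>b\<in>B. norm b = 1) \<and> pairwise orthogonal B"

text \<open>The symmetric form M of the Lie algebra (V, restricted bracket, restricted inner product),
  computed in an orthonormal basis of V.  Mform mu UNIV is M, Mform mu n is M_n.\<close>
definition Mform :: "('a::euclidean_space \<Rightarrow> 'a \<Rightarrow> 'a) \<Rightarrow> 'a set \<Rightarrow> 'a \<Rightarrow> 'a \<Rightarrow> real" where
  "Mform \<mu> V X Y = (let B = (SOME B. onb V B) in
     - 1/2 * (\<Sum>k\<in>B. inner (\<mu> X k) (\<mu> Y k))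
     + 1/4 * (\<Sum>k\<in>B. \<Sum>j\<in>B. inner (\<mu> k j) X * inner (\<mu> k j) Y))"

text \<open>Transpose (within V) of the restriction of T to V:
  the map V \<rightarrow> V with inner (transp_on_sub V T x) y = inner x (T y) for x y in V.\<close>
definition transp_on_sub :: "'a::euclidean_space set \<Rightarrow> ('a \<Rightarrow> 'a) \<Rightarrow> 'a \<Rightarrow> 'a" where
  "transp_on_sub V T x = (let B = (SOME B. onb V B) in (\<Sum>b\<in>B. inner x (T b) *\<^sub>R b))"

definition trace_on :: "'a::euclidean_space set \<Rightarrow> ('a \<Rightarrow> 'a) \<Rightarrow> real" where
  "trace_on V T = (let B = (SOME B. onb V B) in (\<Sum>b\<in>B. inner (T b) b))"

end

theory Submission
  imports Defs
begin

lemma onb_orth: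
  assumes "onb V B" "b \<in> B" "c \<in> B"
  shows "inner b c = (if b = c then 1 else 0)"
  using assms unfolding onb_def pairwise_def orthogonal_def
  by (auto simp: norm_eq_1)

lemma onb_expand:
  assumes B: "onb V B" and v: "v \<in> V"
  shows "v = (\<Sum>b\<in>B. inner v b *\<^sub>R b)"
proof -
  have fin: "finite B" using B by (simp add: onb_def)
  define w where "w = v - (\<Sum>b\<in>B. inner v b *\<^sub>R b)"
  have "w \<in> span B"
  proof -
    have "v \<in> span B" using B v by (simp add: onb_def)
    moreover have "(\<Sum>b\<in>B. inner v b *\<^sub>R b) \<in> span B"
      by (intro span_sum span_scale span_base)
    ultimately show "w \<in> span B" unfolding w_def by (rule span_diff)
  qed
  moreover have "orthogonal w c" if "c \<in> B" for c
  proof -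
    have "inner (\<Sum>b\<in>B. inner v b *\<^sub>R b) c = (\<Sum>b\<in>B. inner v b * inner b c)"
      by (simp add: inner_sum_left)
    also have "\<dots> = (\<Sum>b\<in>B. if b = c then inner v b else 0)"
      by (rule sum.cong) (use onb_orth[OF B _ that] in auto)
    also have "\<dots> = inner v c" using fin that by simp
    finally show ?thesis unfolding w_def orthogonal_def by (simp add: inner_diff_left)
  qed
  ultimately have "orthogonal w w" using orthogonal_to_span by blast
  then have "w = 0" by (simp add: orthogonal_def)
  then show ?thesis unfolding w_def by simp
qed

lemma onb_parseval:
  assumes B: "onb V B" and v: "v \<in> V"
  shows "inner v w = (\<Sum>b\<in>B. inner v b * inner b w)"
proof -
  have "inner v w = inner (\<Sum>b\<in>B. inner v b *\<^sub>R b) w" using onb_expand[OF B v] by simp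
  then show ?thesis by (simp add: inner_sum_left)
qed

lemma onb_indep:
  assumes B: "onb V B" and C: "onb V C" and f: "bilinear f"
  shows "(\<Sum>b\<in>B. f b b) = (\<Sum>c\<in>C. (f c c :: real))"
proof -
  have fB: "finite B" and fC: "finite C" using B C by (auto simp: onb_def)
  have BV: "b \<in> V" if "b \<in> B" for b using B that by (auto simp: onb_def)
  have CV: "c \<in> V" if "c \<in> C" for c using C that by (auto simp: onb_def)
  have "(\<Sum>b\<in>B. f b b) = (\<Sum>b\<in>B. f (\<Sum>c\<in>C. inner b c *\<^sub>R c) (\<Sum>c\<in>C. inner b c *\<^sub>R c))"
    by (rule sum.cong[OF refl]) (metis onb_expand[OF C BV])
  also have "\<dots> = (\<Sum>b\<in>B. \<Sum>c\<in>C. \<Sum>d\<in>C. inner b c * inner b d * f c d)"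
    by (simp add: bilinear_sum[OF f] sum.cartesian_product bilinear_lmul[OF f] bilinear_rmul[OF f]
        split_def mult_ac)
  also have "\<dots> = (\<Sum>c\<in>C. \<Sum>d\<in>C. (\<Sum>b\<in>B. inner c b * inner b d) * f c d)"
  proof -
    have "(\<Sum>b\<in>B. \<Sum>c\<in>C. \<Sum>d\<in>C. inner b c * inner b d * f c d)
        = (\<Sum>c\<in>C. \<Sum>b\<in>B. \<Sum>d\<in>C. inner b c * inner b d * f c d)" by (rule sum.swap)
    also have "\<dots> = (\<Sum>c\<in>C. \<Sum>d\<in>C. \<Sum>b\<in>B. inner b c * inner b d * f c d)"
      by (intro sum.cong refl sum.swap)
    finally show ?thesis
      by (simp add: sum_distrib_left inner_commute mult_ac)
  qed
  also have "\<dots> = (\<Sum>c\<in>C. \<Sum>d\<in>C. inner c d * f c d)"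
    by (simp add: onb_parseval[OF B CV])
  also have "\<dots> = (\<Sum>c\<in>C. \<Sum>d\<in>C. if c = d then f c d else 0)"
    by (intro sum.cong refl) (simp add: onb_orth[OF C])
  also have "\<dots> = (\<Sum>c\<in>C. f c c)" using fC by simp
  finally show ?thesis .
qed

lemma bil_lin_r: "bilinear \<mu> \<Longrightarrow> linear (\<mu> x)"
  by (simp add: bilinear_def)

lemma bil_lin_l: "bilinear \<mu> \<Longrightarrow> linear (\<lambda>x. \<mu> x y)"
  by (simp add: bilinear_def)

lemma bil_f1:
  assumes "bilinear \<mu>"
  shows "bilinear (\<lambda>a b. inner (\<mu> X a) (\<mu> Y b))"
  by (simp add: bilinear_def linear_iff bilinear_radd[OF assms] bilinear_rmul[OF assms]
      bilinear_ladd[OF assms] bilinear_lmul[OF assms] inner_add_left inner_add_right)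

lemma bil_f2:
  assumes "bilinear \<mu>"
  shows "bilinear (\<lambda>a b. inner (\<mu> k a) X * inner (\<mu> k b) Y)"
  by (simp add: bilinear_def linear_iff bilinear_radd[OF assms] bilinear_rmul[OF assms]
      inner_add_left distrib_left distrib_right)

lemma bil_f3:
  assumes "bilinear \<mu>"
  shows "bilinear (\<lambda>a b. \<Sum>j\<in>C. inner (\<mu> a j) X * inner (\<mu> b j) Y)"
  by (simp add: bilinear_def linear_iff bilinear_ladd[OF assms] bilinear_lmul[OF assms] inner_add_left
      distrib_left distrib_right sum.distrib sum_distrib_left mult.assoc mult.left_commute)

lemma Mform_basis:
  assumes mu: "bilinear \<mu>" and C: "onb V C"
  shows "Mform \<mu> V X Y = - 1/2 * (\<Sum>k\<in>C. inner (\<mu> X k) (\<mu> Y k))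
     + 1/4 * (\<Sum>k\<in>C. \<Sum>j\<in>C. inner (\<mu> k j) X * inner (\<mu> k j) Y)"
proof -
  define B where "B = (SOME B. onb V B)"
  have B: "onb V B" unfolding B_def using C by (rule someI)
  have 1: "(\<Sum>k\<in>B. inner (\<mu> X k) (\<mu> Y k)) = (\<Sum>k\<in>C. inner (\<mu> X k) (\<mu> Y k))"
    using onb_indep[OF B C bil_f1[OF mu]] .
  have "(\<Sum>k\<in>B. \<Sum>j\<in>B. inner (\<mu> k j) X * inner (\<mu> k j) Y)
      = (\<Sum>k\<in>B. \<Sum>j\<in>C. inner (\<mu> k j) X * inner (\<mu> k j) Y)"
    by (intro sum.cong refl onb_indep[OF B C bil_f2[OF mu]])
  also have "\<dots> = (\<Sum>k\<in>C. \<Sum>j\<in>C. inner (\<mu> k j) X * inner (\<mu> k j) Y)"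
    using onb_indep[OF B C bil_f3[OF mu, of X Y C]] .
  finally show ?thesis using 1 unfolding Mform_def B_def[symmetric] Let_def by simp
qed

lemma trace_formula:
  assumes mu: "bilinear \<mu>" and N: "onb n N" and N0: "N = (SOME B. onb n B)"
    and id: "\<forall>x y. y \<in> n \<longrightarrow> \<mu> x y \<in> n"
  shows "trace_on n (\<lambda>x. \<mu> A (transp_on_sub n (\<mu> Y) x)) = (\<Sum>c\<in>N. inner (\<mu> A c) (\<mu> Y c))"
proof -
  have lin: "linear (\<mu> A)" using mu by (rule bil_lin_r)
  have Nn: "c \<in> n" if "c \<in> N" for c using N that by (auto simp: onb_def)
  have "trace_on n (\<lambda>x. \<mu> A (transp_on_sub n (\<mu> Y) x))
     = (\<Sum>b\<in>N. inner (\<mu> A (\<Sum>c\<in>N. inner b (\<mu> Y c) *\<^sub>R c)) b)"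
    unfolding trace_on_def transp_on_sub_def Let_def N0[symmetric] ..
  also have "\<dots> = (\<Sum>b\<in>N. \<Sum>c\<in>N. inner b (\<mu> Y c) * inner (\<mu> A c) b)"
    by (simp add: linear_sum[OF lin] linear_scale[OF lin] inner_sum_left)
  also have "\<dots> = (\<Sum>c\<in>N. \<Sum>b\<in>N. inner (\<mu> A c) b * inner b (\<mu> Y c))"
    by (subst sum.swap) (simp add: mult.commute)
  also have "\<dots> = (\<Sum>c\<in>N. inner (\<mu> A c) (\<mu> Y c))"
    by (intro sum.cong refl onb_parseval[OF N, symmetric]) (use id Nn in blast)
  finally show ?thesis .
qed

lemma split2:
  assumes "finite R" "finite N" "R \<inter> N = {}"
  shows "(\<Sum>k\<in>R \<union> N. \<Sum>j\<in>R \<union> N. g k j :: real) =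
    (\<Sum>k\<in>R. \<Sum>j\<in>R. g k j) + (\<Sum>k\<in>R. \<Sum>j\<in>N. g k j)
    + (\<Sum>k\<in>N. \<Sum>j\<in>R. g k j) + (\<Sum>k\<in>N. \<Sum>j\<in>N. g k j)"
  using assms by (simp add: sum.union_disjoint sum.distrib)

lemma skew:
  assumes "lie_algebra \<mu>"
  shows "\<mu> a b = - \<mu> b a"
proof -
  have mu: "bilinear \<mu>" and alt: "\<And>x. \<mu> x x = 0" using assms by (auto simp: lie_algebra_def)
  have "0 = \<mu> (a + b) (a + b)" using alt by simp
  also have "\<dots> = \<mu> a b + \<mu> b a"
    by (simp only: bilinear_ladd[OF mu] bilinear_radd[OF mu]) (simp add: alt)
  finally have "\<mu> a b + \<mu> b a = 0" by metis
  then show ?thesis by (simp add: eq_neg_iff_add_eq_0)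
qed

theorem lemma3p2:
  fixes \<mu> :: "'a::euclidean_space \<Rightarrow> 'a \<Rightarrow> 'a"
    and n r R :: "'a set"
  assumes "lie_algebra \<mu>"
    and "is_nilradical \<mu> n"
    and "r = {x. \<forall>y\<in>n. inner x y = 0}"
    and "\<forall>A\<in>r. \<forall>B\<in>r. \<mu> A B \<in> r"
    and "onb r R"
  shows "(\<forall>Z\<in>n. \<forall>W\<in>n. Mform \<mu> UNIV Z W =
            Mform \<mu> n Z W
            + 1/2 * (\<Sum>ri\<in>R. inner (\<mu> ri (transp_on_sub n (\<mu> ri) Z) - transp_on_sub n (\<mu> ri) (\<mu> ri Z)) W))
       \<and> (\<forall>A\<in>r. \<forall>B\<in>r. Mform \<mu> UNIV A B =
            Mform \<mu> r A B - 1/2 * trace_on n (\<lambda>x. \<mu> A (transp_on_sub n (\<mu> B) x)))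
       \<and> (\<forall>A\<in>r. \<forall>W\<in>n. Mform \<mu> UNIV A W =
            - 1/2 * trace_on n (\<lambda>x. \<mu> A (transp_on_sub n (\<mu> W) x)))"
proof -
  note lie = assms(1) and rdef = assms(3) and rsub = assms(4) and R = assms(5)
  have mu: "bilinear \<mu>" using lie by (simp add: lie_algebra_def)
  have "lie_ideal \<mu> n" using assms(2) by (simp add: is_nilradical_def)
  then have sn: "subspace n" and id: "\<And>x y. y \<in> n \<Longrightarrow> \<mu> x y \<in> n"
    by (auto simp: lie_ideal_def)
  have idl: "\<mu> y x \<in> n" if "y \<in> n" for x y
    using skew[OF lie, of y x] id[OF that, of x] sn by (simp add: subspace_neg)
  define N where "N = (SOME B. onb n B)"
  obtain N1 where "N1 \<subseteq> n" "pairwise orthogonal N1" "\<And>x. x \<in> N1 \<Longrightarrow> norm x = 1"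
    "independent N1" "span N1 = n"
    using orthonormal_basis_subspace[OF sn] by metis
  then have "onb n N1" unfolding onb_def using independent_imp_finite by blast
  then have N: "onb n N" unfolding N_def by (rule someI)
  have orth: "inner x y = 0" if "x \<in> r" "y \<in> n" for x y using that rdef by auto
  have orth': "inner y x = 0" if "x \<in> r" "y \<in> n" for x y using orth[OF that] by (simp add: inner_commute)
  have Rr: "\<And>x. x \<in> R \<Longrightarrow> x \<in> r" and fR: "finite R" using R by (auto simp: onb_def)
  have Nn: "\<And>x. x \<in> N \<Longrightarrow> x \<in> n" and fN: "finite N" using N by (auto simp: onb_def)
  have disj: "R \<inter> N = {}"
  proof (rule ccontr)
    assume "R \<inter> N \<noteq> {}"
    then obtain b where b: "b \<in> R" "b \<in> N" by blast
    then have "inner b b = 0" using orth Rr Nn by blast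
    moreover have "inner b b = 1" using onb_orth[OF R b(1) b(1)] by simp
    ultimately show False by simp
  qed
  have U: "onb UNIV (R \<union> N)"
    unfolding onb_def
  proof (intro conjI)
    show "finite (R \<union> N)" using fR fN by simp
    show "R \<union> N \<subseteq> UNIV" by simp
    show "\<forall>b\<in>R \<union> N. norm b = 1" using R N by (auto simp: onb_def)
    show "pairwise orthogonal (R \<union> N)"
      unfolding pairwise_def
    proof (intro ballI impI)
      fix x y assume xy: "x \<in> R \<union> N" "y \<in> R \<union> N" "x \<noteq> y"
      then show "orthogonal x y"
        using onb_orth[OF R, of x y] onb_orth[OF N, of x y] orth[OF Rr Nn, of x y] orth'[OF Rr Nn, of y x]
        by (auto simp: orthogonal_def)
    qed
    show "span (R \<union> N) = UNIV"
    proof -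
      have "x \<in> span (R \<union> N)" for x
      proof -
        define p where "p = (\<Sum>c\<in>N. inner x c *\<^sub>R c)"
        have "p \<in> span N" unfolding p_def by (intro span_sum span_scale span_base)
        then have p: "p \<in> span (R \<union> N)" by (meson span_mono sup_ge2 subsetD)
        have "x - p \<in> r" unfolding rdef
        proof (intro CollectI ballI)
          fix y assume y: "y \<in> n"
          have "inner p y = (\<Sum>c\<in>N. inner x c * inner c y)" unfolding p_def by (simp add: inner_sum_left)
          also have "\<dots> = inner y x" using onb_parseval[OF N y, of x]
            by (simp add: inner_commute mult.commute)
          finally show "inner (x - p) y = 0" by (simp add: inner_diff_left inner_commute[of x y])
        qed
        then have "x - p \<in> span R" using R by (simp add: onb_def)
        then have "x - p \<in> span (R \<union> N)" by (meson span_mono sup_ge1 subsetD)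
        from span_add[OF this p] show ?thesis by simp
      qed
      then show ?thesis by blast
    qed
  qed
  have MU: "Mform \<mu> UNIV X Y = - 1/2 * ((\<Sum>k\<in>R. inner (\<mu> X k) (\<mu> Y k)) + (\<Sum>k\<in>N. inner (\<mu> X k) (\<mu> Y k)))
     + 1/4 * ((\<Sum>k\<in>R. \<Sum>j\<in>R. inner (\<mu> k j) X * inner (\<mu> k j) Y)
             + (\<Sum>k\<in>R. \<Sum>j\<in>N. inner (\<mu> k j) X * inner (\<mu> k j) Y)
             + (\<Sum>k\<in>N. \<Sum>j\<in>R. inner (\<mu> k j) X * inner (\<mu> k j) Y)
             + (\<Sum>k\<in>N. \<Sum>j\<in>N. inner (\<mu> k j) X * inner (\<mu> k j) Y))" for X Y
    unfolding Mform_basis[OF mu U] split2[OF fR fN disj]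
    using fR fN disj by (simp add: sum.union_disjoint)
  have MN: "Mform \<mu> n X Y = - 1/2 * (\<Sum>k\<in>N. inner (\<mu> X k) (\<mu> Y k))
     + 1/4 * (\<Sum>k\<in>N. \<Sum>j\<in>N. inner (\<mu> k j) X * inner (\<mu> k j) Y)" for X Y
    using Mform_basis[OF mu N] .
  have MR: "Mform \<mu> r X Y = - 1/2 * (\<Sum>k\<in>R. inner (\<mu> X k) (\<mu> Y k))
     + 1/4 * (\<Sum>k\<in>R. \<Sum>j\<in>R. inner (\<mu> k j) X * inner (\<mu> k j) Y)" for X Y
    using Mform_basis[OF mu R] .
  have TR: "trace_on n (\<lambda>x. \<mu> A (transp_on_sub n (\<mu> Y) x)) = (\<Sum>c\<in>N. inner (\<mu> A c) (\<mu> Y c))" for A Y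
    using trace_formula[OF mu N N_def] id by blast
  have c1: "\<forall>Z\<in>n. \<forall>W\<in>n. Mform \<mu> UNIV Z W =
            Mform \<mu> n Z W
            + 1/2 * (\<Sum>ri\<in>R. inner (\<mu> ri (transp_on_sub n (\<mu> ri) Z) - transp_on_sub n (\<mu> ri) (\<mu> ri Z)) W)"
  proof (intro ballI)
    fix Z W assume Z: "Z \<in> n" and W: "W \<in> n"
    have per: "inner (\<mu> ri (transp_on_sub n (\<mu> ri) Z) - transp_on_sub n (\<mu> ri) (\<mu> ri Z)) W
       = (\<Sum>c\<in>N. inner (\<mu> ri c) Z * inner (\<mu> ri c) W) - inner (\<mu> Z ri) (\<mu> W ri)" for ri
    proof -
      have lin: "linear (\<mu> ri)" using mu by (rule bil_lin_r)
      have a: "inner (\<mu> ri (\<Sum>c\<in>N. inner Z (\<mu> ri c) *\<^sub>R c)) W = (\<Sum>c\<in>N. inner (\<mu> ri c) Z * inner (\<mu> ri c) W)"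
        by (simp add: linear_sum[OF lin] linear_scale[OF lin] inner_sum_left inner_sum_right inner_commute)
      have "inner (\<Sum>c\<in>N. inner (\<mu> ri Z) (\<mu> ri c) *\<^sub>R c) W = (\<Sum>c\<in>N. inner (\<mu> ri Z) (\<mu> ri c) * inner W c)"
        by (simp add: inner_sum_left inner_commute[of W])
      also have "\<dots> = inner (\<mu> ri Z) (\<mu> ri (\<Sum>c\<in>N. inner W c *\<^sub>R c))"
        by (simp add: linear_sum[OF lin] linear_scale[OF lin] inner_sum_right mult.commute)
      also have "\<dots> = inner (\<mu> ri Z) (\<mu> ri W)" using onb_expand[OF N W] by simp
      also have "\<dots> = inner (\<mu> Z ri) (\<mu> W ri)" using skew[OF lie, of ri Z] skew[OF lie, of ri W] by simp
      finally have b: "inner (\<Sum>c\<in>N. inner (\<mu> ri Z) (\<mu> ri c) *\<^sub>R c) W = inner (\<mu> Z ri) (\<mu> W ri)" .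
      show ?thesis unfolding transp_on_sub_def Let_def N_def[symmetric] inner_diff_left a b ..
    qed
    have RR: "(\<Sum>k\<in>R. \<Sum>j\<in>R. inner (\<mu> k j) Z * inner (\<mu> k j) W) = 0"
      using rsub Rr orth Z by (intro sum.neutral ballI) simp
    have NR: "(\<Sum>k\<in>N. \<Sum>j\<in>R. inner (\<mu> k j) Z * inner (\<mu> k j) W)
        = (\<Sum>k\<in>R. \<Sum>j\<in>N. inner (\<mu> k j) Z * inner (\<mu> k j) W)"
    proof -
      have "(\<Sum>k\<in>N. \<Sum>j\<in>R. inner (\<mu> k j) Z * inner (\<mu> k j) W)
          = (\<Sum>k\<in>N. \<Sum>j\<in>R. inner (\<mu> j k) Z * inner (\<mu> j k) W)"
        using skew[OF lie] by (intro sum.cong refl) (metis inner_minus_left minus_mult_minus)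
      also have "\<dots> = (\<Sum>k\<in>R. \<Sum>j\<in>N. inner (\<mu> k j) Z * inner (\<mu> k j) W)"
        by (rule sum.swap)
      finally show ?thesis .
    qed
    show "Mform \<mu> UNIV Z W = Mform \<mu> n Z W
            + 1/2 * (\<Sum>ri\<in>R. inner (\<mu> ri (transp_on_sub n (\<mu> ri) Z) - transp_on_sub n (\<mu> ri) (\<mu> ri Z)) W)"
      unfolding MU MN per RR NR sum_subtractf by (simp add: field_simps)
  qed
  have c2: "\<forall>A\<in>r. \<forall>B\<in>r. Mform \<mu> UNIV A B =
            Mform \<mu> r A B - 1/2 * trace_on n (\<lambda>x. \<mu> A (transp_on_sub n (\<mu> B) x))"
  proof (intro ballI)
    fix A B assume A: "A \<in> r" and B: "B \<in> r"
    have RN: "(\<Sum>k\<in>R. \<Sum>j\<in>N. inner (\<mu> k j) A * inner (\<mu> k j) B) = 0"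
      using id Nn orth' A by (intro sum.neutral ballI) simp
    have NR: "(\<Sum>k\<in>N. \<Sum>j\<in>R. inner (\<mu> k j) A * inner (\<mu> k j) B) = 0"
      using idl Nn orth' A by (intro sum.neutral ballI) simp
    have NN: "(\<Sum>k\<in>N. \<Sum>j\<in>N. inner (\<mu> k j) A * inner (\<mu> k j) B) = 0"
      using id Nn orth' A by (intro sum.neutral ballI) simp
    show "Mform \<mu> UNIV A B = Mform \<mu> r A B - 1/2 * trace_on n (\<lambda>x. \<mu> A (transp_on_sub n (\<mu> B) x))"
      unfolding MU MR TR RN NR NN by (simp add: field_simps)
  qed
  have c3: "\<forall>A\<in>r. \<forall>W\<in>n. Mform \<mu> UNIV A W =
            - 1/2 * trace_on n (\<lambda>x. \<mu> A (transp_on_sub n (\<mu> W) x))"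
  proof (intro ballI)
    fix A W assume A: "A \<in> r" and W: "W \<in> n"
    have S1: "(\<Sum>k\<in>R. inner (\<mu> A k) (\<mu> W k)) = 0"
      using rsub Rr orth idl A W by (intro sum.neutral ballI) simp
    have RR: "(\<Sum>k\<in>R. \<Sum>j\<in>R. inner (\<mu> k j) A * inner (\<mu> k j) W) = 0"
      using rsub Rr orth W by (intro sum.neutral ballI) simp
    have RN: "(\<Sum>k\<in>R. \<Sum>j\<in>N. inner (\<mu> k j) A * inner (\<mu> k j) W) = 0"
      using id Nn orth' A by (intro sum.neutral ballI) simp
    have NR: "(\<Sum>k\<in>N. \<Sum>j\<in>R. inner (\<mu> k j) A * inner (\<mu> k j) W) = 0"
      using idl Nn orth' A by (intro sum.neutral ballI) simp
    have NN: "(\<Sum>k\<in>N. \<Sum>j\<in>N. inner (\<mu> k j) A * inner (\<mu> k j) W) = 0"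
      using id Nn orth' A by (intro sum.neutral ballI) simp
    show "Mform \<mu> UNIV A W = - 1/2 * trace_on n (\<lambda>x. \<mu> A (transp_on_sub n (\<mu> W) x))"
      unfolding MU TR S1 RR RN NR NN by simp
  qed
  show ?thesis using c1 c2 c3 by blast
qed

end
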